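(* Let $G=(V,E)$ be a $d$-regular hypergraph and $k$ an integer. Then $\mathrm{DkSH}_d(G,k)\le\mathrm{MCDSH}_d(G,k)/p$, where $p=d!/d^d$.
   Context: A $d$-regular hypergraph has all hyperedges of size exactly $d$. For $S\subseteq V$, $E(S)=\{e\in E:e\subseteq S\}$; for $\phi:S\to[d]$, $E_\phi(S)=\{e\in E:e=\{v_1,\dots,v_d\}\subseteq S,\ \phi(v_i)\ne\phi(v_j)\ \forall i\ne j\}$. $\mathrm{DkSH}_d(G,k)$ is the maximum of $|E(S)|$ over $S\subseteq V$ with $|S|\le k$ (optimal value of Densest-$k$-Subhypergraph), and $\mathrm{MCDSH}_d(G,k)$ is the maximum of $|E_\phi(S)|$ over $S\subseteq V$ with $|S|\le k$ and $\phi:S\to[d]$. *)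

theory Defs
  imports Complex_Main
begin

definition regular_hypergraph :: "nat \<Rightarrow> 'a set \<Rightarrow> 'a set set \<Rightarrow> bool" where
  "regular_hypergraph d V E \<longleftrightarrow> finite V \<and> (\<forall>e\<in>E. e \<subseteq> V \<and> card e = d)"

definition induced_edges :: "'a set set \<Rightarrow> 'a set \<Rightarrow> 'a set set" where
  "induced_edges E S = {e\<in>E. e \<subseteq> S}"

definition colorful_edges :: "'a set set \<Rightarrow> 'a set \<Rightarrow> ('a \<Rightarrow> nat) \<Rightarrow> 'a set set" where
  "colorful_edges E S \<phi> = {e\<in>E. e \<subseteq> S \<and> (\<forall>u\<in>e. \<forall>v\<in>e. u \<noteq> v \<longrightarrow> \<phi> u \<noteq> \<phi> v)}"

definition DkSH :: "nat \<Rightarrow> 'a set \<Rightarrow> 'a set set \<Rightarrow> nat \<Rightarrow> nat" where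
  "DkSH d V E k = Max {card (induced_edges E S) | S. S \<subseteq> V \<and> card S \<le> k}"

definition MCDSH :: "nat \<Rightarrow> 'a set \<Rightarrow> 'a set set \<Rightarrow> nat \<Rightarrow> nat" where
  "MCDSH d V E k = Max {card (colorful_edges E S \<phi>) | S \<phi>.
      S \<subseteq> V \<and> card S \<le> k \<and> \<phi> ` S \<subseteq> {1..d}}"

end

theory Submission
  imports Defs "HOL-Library.FuncSet"
begin

lemma card_inj_PiE:
  assumes "finite A" "finite B" "card A = card B"
  shows "card {f \<in> A \<rightarrow>\<^sub>E B. inj_on f A} = fact (card A)"
  using assms
proof (induction A arbitrary: B rule: finite_induct)
  case empty
  then show ?case by simp
next
  case (insert x A)
  let ?T = "Sigma B (\<lambda>y. {g \<in> A \<rightarrow>\<^sub>E (B - {y}). inj_on g A})"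
  have eq: "{f \<in> insert x A \<rightarrow>\<^sub>E B. inj_on f (insert x A)} = (\<lambda>(y, g). g(x := y)) ` ?T"
  proof
    show "{f \<in> insert x A \<rightarrow>\<^sub>E B. inj_on f (insert x A)} \<subseteq> (\<lambda>(y, g). g(x := y)) ` ?T"
    proof
      fix f assume f: "f \<in> {f \<in> insert x A \<rightarrow>\<^sub>E B. inj_on f (insert x A)}"
      have "(f x, f(x := undefined)) \<in> ?T"
        using f insert.hyps(2) by (auto simp: PiE_iff inj_on_def extensional_def) 
      moreover have "f = (\<lambda>(y, g). g(x := y)) (f x, f(x := undefined))" by simp
      ultimately show "f \<in> (\<lambda>(y, g). g(x := y)) ` ?T" by blast
    qed
  next
    show "(\<lambda>(y, g). g(x := y)) ` ?T \<subseteq> {f \<in> insert x A \<rightarrow>\<^sub>E B. inj_on f (insert x A)}"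
      using insert.hyps(2) by (auto simp: PiE_iff inj_on_def extensional_def split: if_splits)
  qed
  have inj: "inj_on (\<lambda>(y, g). g(x := y)) ?T"
  proof (rule inj_onI)
    fix p q
    assume a0: "p \<in> ?T" "q \<in> ?T" "(\<lambda>(y, g). g(x := y)) p = (\<lambda>(y, g). g(x := y)) q"
    obtain y g y' g' where pq: "p = (y, g)" "q = (y', g')" by (cases p, cases q) auto
    have a: "(y, g) \<in> ?T" "(y', g') \<in> ?T" "g(x := y) = g'(x := y')" using a0 pq by auto
    have "y = y'" using fun_cong[OF a(3), of x] by simp
    moreover have "g = g'"
    proof
      fix z show "g z = g' z"
      proof (cases "z = x")
        case True
        then show ?thesis using a(1,2) insert.hyps(2) by (auto simp: PiE_iff extensional_def)
      next
        case False
        then show ?thesis using fun_cong[OF a(3), of z] by simp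
      qed
    qed
    ultimately show "p = q" using pq by simp
  qed
  have "card ?T = (\<Sum>y\<in>B. card {g \<in> A \<rightarrow>\<^sub>E (B - {y}). inj_on g A})"
    using insert.prems insert.hyps(1) by (subst card_SigmaI) (auto simp: finite_PiE)
  also have "\<dots> = (\<Sum>y\<in>B. fact (card A))"
  proof (rule sum.cong[OF refl])
    fix y assume "y \<in> B"
    then have "card (B - {y}) = card A" using insert by simp
    then show "card {g \<in> A \<rightarrow>\<^sub>E (B - {y}). inj_on g A} = fact (card A)"
      using insert by auto
  qed
  also have "\<dots> = fact (card (insert x A))"
    using insert by (metis card_insert_disjoint fact_Suc mult.commute of_nat_id sum_constant)
  finally have c1: "card ?T = fact (card (insert x A))" .
  have c2: "card ((\<lambda>(y, g). g(x := y)) ` ?T) = card ?T" by (rule card_image[OF inj])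
  show ?case unfolding eq c2 by (rule c1)
qed

lemma card_inj_on_sub:
  assumes "finite S" "e \<subseteq> S" "card e = card B" "finite B"
  shows "card {f \<in> S \<rightarrow>\<^sub>E B. inj_on f e} = fact (card B) * card B ^ (card S - card e)"
proof -
  let ?I = "{g \<in> e \<rightarrow>\<^sub>E B. inj_on g e}"
  let ?P = "(S - e) \<rightarrow>\<^sub>E B"
  let ?m = "\<lambda>(g, h). (\<lambda>x. if x \<in> e then g x else h x)"
  have eq: "{f \<in> S \<rightarrow>\<^sub>E B. inj_on f e} = ?m ` (?I \<times> ?P)"
  proof
    show "{f \<in> S \<rightarrow>\<^sub>E B. inj_on f e} \<subseteq> ?m ` (?I \<times> ?P)"
    proof
      fix f assume f: "f \<in> {f \<in> S \<rightarrow>\<^sub>E B. inj_on f e}"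
      have "(restrict f e, restrict f (S - e)) \<in> ?I \<times> ?P"
      proof -
        have fS: "f \<in> S \<rightarrow> B" using f by (simp add: PiE_iff Pi_iff)
        have "f \<in> e \<rightarrow> B" using fS assms(2) by auto
        moreover have "f \<in> S - e \<rightarrow> B" using fS by auto
        moreover have "inj_on f e" using f by simp
        ultimately show ?thesis by simp
      qed
      moreover have "f = ?m (restrict f e, restrict f (S - e))"
        using f assms(2) by (auto simp: PiE_iff extensional_def fun_eq_iff)
      ultimately show "f \<in> ?m ` (?I \<times> ?P)" by blast
    qed
  next
    show "?m ` (?I \<times> ?P) \<subseteq> {f \<in> S \<rightarrow>\<^sub>E B. inj_on f e}"
      using assms(2) by (auto simp: PiE_iff extensional_def inj_on_def)
  qed
  have inj: "inj_on ?m (?I \<times> ?P)"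
  proof (rule inj_onI)
    fix p q
    assume a0: "p \<in> ?I \<times> ?P" "q \<in> ?I \<times> ?P" "?m p = ?m q"
    obtain g h g' h' where pq: "p = (g, h)" "q = (g', h')" by (cases p, cases q) auto
    have a: "(g, h) \<in> ?I \<times> ?P" "(g', h') \<in> ?I \<times> ?P"
      "(\<lambda>x. if x \<in> e then g x else h x) = (\<lambda>x. if x \<in> e then g' x else h' x)"
      using a0 unfolding pq by (simp_all only: prod.case)
    have "g = g'"
    proof
      fix z show "g z = g' z"
        using a(1,2) fun_cong[OF a(3), of z] by (cases "z \<in> e") (simp_all add: PiE_iff extensional_def)
    qed
    moreover have "h = h'"
    proof
      fix z show "h z = h' z"
        using a(1,2) fun_cong[OF a(3), of z] by (cases "z \<in> e") (simp_all add: PiE_iff extensional_def)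
    qed
    ultimately show "p = q" using pq by simp
  qed
  have fe: "finite e" using assms finite_subset by blast
  have 1: "card {f \<in> S \<rightarrow>\<^sub>E B. inj_on f e} = card ?I * card ?P"
    unfolding eq card_image[OF inj] by (rule card_cartesian_product)
  have 2: "card ?I = fact (card B)" using card_inj_PiE[OF fe assms(4,3)] assms(3) by simp
  have 3: "card ?P = card B ^ (card S - card e)"
    using assms fe by (simp add: card_PiE card_Diff_subset[OF fe assms(2)] prod_constant)
  show ?thesis using 1 2 3 by simp
qed

lemma card_filter_sum:
  assumes "finite A"
  shows "card {x \<in> A. P x} = (\<Sum>x\<in>A. if P x then 1 else (0::nat))"
proof -
  have "(\<Sum>x\<in>A. if P x then 1 else (0::nat)) = (\<Sum>x\<in>{x \<in> A. P x}. 1)"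
    using assms by (simp add: sum.If_cases Int_def)
  then show ?thesis by simp
qed

theorem mainTheorem17:
  fixes d k :: nat and V :: "'a set" and E :: "'a set set"
  assumes "regular_hypergraph d V E"
  shows "real (DkSH d V E k) \<le> real (MCDSH d V E k) / (fact d / real d ^ d)"
proof -
  have fV: "finite V" and Ep: "\<And>e. e \<in> E \<Longrightarrow> e \<subseteq> V \<and> card e = d"
    using assms by (auto simp: regular_hypergraph_def)
  have fE: "finite E"
    by (rule finite_subset[of E "Pow V"]) (use Ep fV in auto)
  define D where "D = {card (induced_edges E S) | S. S \<subseteq> V \<and> card S \<le> k}"
  define M where "M = {card (colorful_edges E S \<phi>) | S \<phi>. S \<subseteq> V \<and> card S \<le> k \<and> \<phi> ` S \<subseteq> {1..d}}"
  have DM: "DkSH d V E k = Max D" "MCDSH d V E k = Max M"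
    unfolding D_def M_def DkSH_def MCDSH_def by simp_all
  have "D \<subseteq> {..card E}"
    unfolding D_def induced_edges_def using fE by (auto intro!: card_mono)
  then have fD: "finite D" using finite_subset by blast
  have "M \<subseteq> {..card E}"
    unfolding M_def colorful_edges_def using fE by (auto intro!: card_mono)
  then have fM: "finite M" using finite_subset by blast
  have "card (induced_edges E {}) \<in> D" unfolding D_def by auto
  then have "D \<noteq> {}" by auto
  then have "Max D \<in> D" using fD by (rule Max_in[rotated])
  then obtain S0 where S0: "S0 \<subseteq> V" "card S0 \<le> k" "Max D = card (induced_edges E S0)"
    unfolding D_def by auto
  have Mge: "card (colorful_edges E S \<phi>) \<le> Max M"
    if "S \<subseteq> V" "card S \<le> k" "\<phi> ` S \<subseteq> {1..d}" for S \<phi>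
    using that fM by (intro Max_ge) (auto simp: M_def)
  define IE where "IE = induced_edges E S0"
  define n where "n = card IE"
  have fS0: "finite S0" using finite_subset[OF S0(1) fV] .
  have fIE: "finite IE" unfolding IE_def induced_edges_def using fE by simp
  have nM: "n * fact d \<le> d ^ d * Max M"
  proof (cases "n = 0")
    case True
    then show ?thesis by simp
  next
    case False
    then have "IE \<noteq> {}" unfolding n_def by auto
    then obtain e0 where e0: "e0 \<in> IE" by blast
    then have e0S: "e0 \<subseteq> S0" and e0d: "card e0 = d" using Ep unfolding IE_def induced_edges_def by auto
    have ds: "d \<le> card S0" using card_mono[OF fS0 e0S] e0d by simp
    show ?thesis
    proof (cases "d = 0")
      case True
      have "IE \<subseteq> colorful_edges E {} (\<lambda>_. 1)"
      proof
        fix e assume "e \<in> IE"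
        then have eE: "e \<in> E" unfolding IE_def induced_edges_def by auto
        then have "e \<subseteq> V" "card e = 0" using Ep True by auto
        moreover have "finite e" using finite_subset[OF \<open>e \<subseteq> V\<close> fV] .
        ultimately have "e = {}" by simp
        then show "e \<in> colorful_edges E {} (\<lambda>_. 1)" using eE by (simp add: colorful_edges_def)
      qed
      then have "n \<le> card (colorful_edges E {} (\<lambda>_. 1))"
        unfolding n_def using fE by (intro card_mono) (auto simp: colorful_edges_def)
      also have "\<dots> \<le> Max M" by (rule Mge) auto
      finally show ?thesis using True by simp
    next
      case False
      define F where "F = S0 \<rightarrow>\<^sub>E {1..d}"
      have fF: "finite F" unfolding F_def using fS0 by (simp add: finite_PiE)
      have cF: "card F = d ^ card S0" unfolding F_def using fS0 by (simp add: card_PiE)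
      have col: "colorful_edges E S0 \<phi> = {e \<in> IE. inj_on \<phi> e}" for \<phi>
        unfolding colorful_edges_def IE_def induced_edges_def inj_on_def by auto
      have "(\<Sum>\<phi>\<in>F. card (colorful_edges E S0 \<phi>))
          = (\<Sum>\<phi>\<in>F. \<Sum>e\<in>IE. if inj_on \<phi> e then 1 else (0::nat))"
        unfolding col using fIE by (simp add: card_filter_sum)
      also have "\<dots> = (\<Sum>e\<in>IE. \<Sum>\<phi>\<in>F. if inj_on \<phi> e then 1 else (0::nat))"
        by (rule sum.swap)
      also have "\<dots> = (\<Sum>e\<in>IE. card {\<phi> \<in> F. inj_on \<phi> e})"
        using fF by (simp add: card_filter_sum)
      also have "\<dots> = (\<Sum>e\<in>IE. fact d * d ^ (card S0 - d))"
      proof (rule sum.cong[OF refl])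
        fix e assume "e \<in> IE"
        then have "e \<subseteq> S0" "card e = d" using Ep unfolding IE_def induced_edges_def by auto
        then show "card {\<phi> \<in> F. inj_on \<phi> e} = fact d * d ^ (card S0 - d)"
          unfolding F_def using card_inj_on_sub[OF fS0, of e "{1..d}"] by simp
      qed
      also have "\<dots> = n * (fact d * d ^ (card S0 - d))" by (simp add: n_def)
      finally have eqs: "(\<Sum>\<phi>\<in>F. card (colorful_edges E S0 \<phi>)) = n * (fact d * d ^ (card S0 - d))" .
      have "(\<Sum>\<phi>\<in>F. card (colorful_edges E S0 \<phi>)) \<le> (\<Sum>\<phi>\<in>F. Max M)"
      proof (rule sum_mono)
        fix \<phi> assume "\<phi> \<in> F"
        then have "\<phi> ` S0 \<subseteq> {1..d}" unfolding F_def by (auto simp: PiE_iff)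
        then show "card (colorful_edges E S0 \<phi>) \<le> Max M" using Mge S0 by blast
      qed
      also have "\<dots> = d ^ card S0 * Max M" using cF by simp
      also have "\<dots> = d ^ (card S0 - d) * (d ^ d * Max M)"
        using ds by (simp add: power_add[symmetric])
      finally have "d ^ (card S0 - d) * (n * fact d) \<le> d ^ (card S0 - d) * (d ^ d * Max M)"
        using eqs by (simp add: ac_simps)
      moreover have "d ^ (card S0 - d) > 0" using False by simp
      ultimately show ?thesis by (metis mult_le_cancel1)
    qed
  qed
  have "DkSH d V E k = n" using DM S0 by (simp add: n_def IE_def)
  moreover have "real n \<le> real (Max M) / (fact d / real d ^ d)"
  proof -
    have "real n * fact d \<le> real d ^ d * real (Max M)"
      using nM by (metis of_nat_fact of_nat_le_iff of_nat_mult of_nat_power)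
    moreover have "(fact d :: real) > 0" by simp
    ultimately show ?thesis
    proof (cases "d = 0")
      case True
      then show ?thesis using nM by simp
    next
      case False
      then have "real d ^ d > 0" by simp
      then show ?thesis using \<open>real n * fact d \<le> real d ^ d * real (Max M)\<close> \<open>(fact d :: real) > 0\<close>
        by (simp add: field_simps)
    qed
  qed
  ultimately show ?thesis using DM by simp
qed

end
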